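(* Let $G$ be a finite group with an abelian Sylow $p$-subgroup $P$. Then \[ \chi(\mathcal F^*_G)=\frac{|\{\varphi\in\mathcal F_G(P): C_P(\varphi)>1\}|}{|\mathcal F_G(P)|}. \]
   Context: $\mathcal F_G(P)=N_G(P)/C_G(P)$, viewed as the group of automorphisms of $P$ induced by conjugation by elements of $N_G(P)$; $C_P(\varphi)$ is the subgroup of elements of $P$ fixed by $\varphi$. $\mathcal F^*_G$ is the category whose objects are the nonidentity $p$-subgroups of $G$, with $\mathcal F^*_G(H,K)=C_G(H)\backslash N_G(H,K)$, $N_G(H,K)=\{g\in G:g^{-1}Hg\le K\}$, composition induced by multiplication. $\chi$ is Leinster's Euler characteristic: for a finite category $\mathcal C$, a weighting is $k^\bullet$ with $\sum_b|\mathcal C(a,b)|k^b=1$ for all $a$, a coweighting is $k_\bullet$ with $\sum_ak_a|\mathcal C(a,b)|=1$ for all $b$, and if both exist $\chi(\mathcal C)=\sum_bk^b=\sum_ak_a$. *)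

theory Defs
  imports Complex_Main "HOL-Algebra.Group" "HOL-Algebra.Coset" "HOL-Computational_Algebra.Primes"
begin

definition p_subgroup :: "('a, 'b) monoid_scheme \<Rightarrow> nat \<Rightarrow> 'a set \<Rightarrow> bool" where
  "p_subgroup G p H \<longleftrightarrow> subgroup H G \<and> (\<exists>n. card H = p ^ n)"

definition sylow_subgroup :: "('a, 'b) monoid_scheme \<Rightarrow> nat \<Rightarrow> 'a set \<Rightarrow> bool" where
  "sylow_subgroup G p P \<longleftrightarrow> p_subgroup G p P \<and> \<not> p dvd (order G div card P)"

definition abelian_set :: "('a, 'b) monoid_scheme \<Rightarrow> 'a set \<Rightarrow> bool" where
  "abelian_set G P \<longleftrightarrow> (\<forall>x\<in>P. \<forall>y\<in>P. x \<otimes>\<^bsub>G\<^esub> y = y \<otimes>\<^bsub>G\<^esub> x)"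

definition centralizer_of :: "('a, 'b) monoid_scheme \<Rightarrow> 'a set \<Rightarrow> 'a set" where
  "centralizer_of G H = {g \<in> carrier G. \<forall>h\<in>H. g \<otimes>\<^bsub>G\<^esub> h = h \<otimes>\<^bsub>G\<^esub> g}"

definition transporter :: "('a, 'b) monoid_scheme \<Rightarrow> 'a set \<Rightarrow> 'a set \<Rightarrow> 'a set" where
  "transporter G H K = {g \<in> carrier G. \<forall>h\<in>H. inv\<^bsub>G\<^esub> g \<otimes>\<^bsub>G\<^esub> h \<otimes>\<^bsub>G\<^esub> g \<in> K}"

definition normalizer_of :: "('a, 'b) monoid_scheme \<Rightarrow> 'a set \<Rightarrow> 'a set" where
  "normalizer_of G H = transporter G H H"

text \<open>F*_G(H,K) = C_G(H) \ N_G(H,K): orbits of left multiplication by C_G(H),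
  i.e. the right cosets C_G(H) g, g in N_G(H,K).\<close>
definition frob_hom :: "('a, 'b) monoid_scheme \<Rightarrow> 'a set \<Rightarrow> 'a set \<Rightarrow> 'a set set" where
  "frob_hom G H K = (\<lambda>g. centralizer_of G H #>\<^bsub>G\<^esub> g) ` transporter G H K"

definition frob_objs :: "('a, 'b) monoid_scheme \<Rightarrow> nat \<Rightarrow> 'a set set" where
  "frob_objs G p = {H. p_subgroup G p H \<and> H \<noteq> {\<one>\<^bsub>G\<^esub>}}"

text \<open>F_G(P) = N_G(P)/C_G(P), as the automorphisms of P induced by conjugation.\<close>
definition fusion_auts :: "('a, 'b) monoid_scheme \<Rightarrow> 'a set \<Rightarrow> ('a \<Rightarrow> 'a) set" where
  "fusion_auts G P =
     (\<lambda>g. \<lambda>x\<in>P. inv\<^bsub>G\<^esub> g \<otimes>\<^bsub>G\<^esub> x \<otimes>\<^bsub>G\<^esub> g) ` normalizer_of G P"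

definition fixed_points :: "'a set \<Rightarrow> ('a \<Rightarrow> 'a) \<Rightarrow> 'a set" where
  "fixed_points P \<phi> = {x \<in> P. \<phi> x = x}"

text \<open>A finite category is given by its (finite) object set and Hom-set cardinalities.\<close>
definition is_weighting :: "'o set \<Rightarrow> ('o \<Rightarrow> 'o \<Rightarrow> nat) \<Rightarrow> ('o \<Rightarrow> rat) \<Rightarrow> bool" where
  "is_weighting Obj Hom k \<longleftrightarrow> (\<forall>a\<in>Obj. (\<Sum>b\<in>Obj. of_nat (Hom a b) * k b) = 1)"

definition is_coweighting :: "'o set \<Rightarrow> ('o \<Rightarrow> 'o \<Rightarrow> nat) \<Rightarrow> ('o \<Rightarrow> rat) \<Rightarrow> bool" where
  "is_coweighting Obj Hom k \<longleftrightarrow> (\<forall>b\<in>Obj. (\<Sum>a\<in>Obj. k a * of_nat (Hom a b)) = 1)"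

definition has_euler_char :: "'o set \<Rightarrow> ('o \<Rightarrow> 'o \<Rightarrow> nat) \<Rightarrow> rat \<Rightarrow> bool" where
  "has_euler_char Obj Hom x \<longleftrightarrow>
     (\<exists>k. is_weighting Obj Hom k) \<and> (\<exists>k. is_coweighting Obj Hom k) \<and>
     (\<forall>k. is_weighting Obj Hom k \<longrightarrow> (\<Sum>b\<in>Obj. k b) = x) \<and>
     (\<forall>k. is_coweighting Obj Hom k \<longrightarrow> (\<Sum>a\<in>Obj. k a) = x)"

end

theory Submission
  imports Defs "HOL-Algebra.Group_Action"
begin



lemma euler_char_intro:
  assumes fin: "finite Obj" and w: "is_weighting Obj Hom k" and c: "is_coweighting Obj Hom c"
    and s: "(\<Sum>b\<in>Obj. k b) = x"
  shows "has_euler_char Obj Hom x"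
proof -
  have key: "(\<Sum>b\<in>Obj. k' b) = (\<Sum>a\<in>Obj. c' a)"
    if "is_weighting Obj Hom k'" "is_coweighting Obj Hom c'" for k' c'
  proof -
    have "(\<Sum>b\<in>Obj. k' b) = (\<Sum>b\<in>Obj. (\<Sum>a\<in>Obj. c' a * of_nat (Hom a b)) * k' b)"
      using that(2) unfolding is_coweighting_def by simp
    also have "\<dots> = (\<Sum>a\<in>Obj. c' a * (\<Sum>b\<in>Obj. of_nat (Hom a b) * k' b))"
      unfolding sum_distrib_right sum_distrib_left
      by (rule trans[OF sum.swap]) (simp add: mult.assoc)
    also have "\<dots> = (\<Sum>a\<in>Obj. c' a)"
      using that(1) unfolding is_weighting_def by simp
    finally show ?thesis .
  qed
  have "\<forall>k'. is_weighting Obj Hom k' \<longrightarrow> (\<Sum>b\<in>Obj. k' b) = x"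
    using key[OF _ c] key[OF w c] s by simp
  moreover have "\<forall>c'. is_coweighting Obj Hom c' \<longrightarrow> (\<Sum>a\<in>Obj. c' a) = x"
    using key[OF w] s by simp
  ultimately show ?thesis unfolding has_euler_char_def
    using w c by blast
qed



lemma exists_down_inverse:
  fixes S :: "'a set set" and f :: "'a set \<Rightarrow> rat"
  assumes "finite S" "\<forall>K\<in>S. finite K"
  shows "\<exists>m. \<forall>K\<in>S. (\<Sum>H\<in>{H\<in>S. H \<subseteq> K}. m H) = f K"
  using assms
proof (induction S rule: finite_remove_induct)
  case empty
  then show ?case by simp
next
  case (remove A)
  obtain K0 where K0: "K0 \<in> A" "card K0 = Max (card ` A)"
    using remove.hyps(1,2) by (metis (mono_tags, lifting) Max_in finite_imageI image_iff image_is_empty)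
  have maxc: "card K \<le> card K0" if "K \<in> A" for K
    using K0 remove.hyps(1) that by simp
  obtain m' where m': "\<forall>K\<in>A - {K0}. (\<Sum>H\<in>{H\<in>A - {K0}. H \<subseteq> K}. m' H) = f K"
    using remove.IH[OF K0(1)] remove.prems by blast
  define m where "m = m'(K0 := f K0 - (\<Sum>H\<in>{H\<in>A - {K0}. H \<subseteq> K0}. m' H))"
  have fin: "finite {H\<in>A - {K0}. H \<subseteq> K}" for K using remove.hyps(1) by simp
  show ?case
  proof (intro exI ballI)
    fix K assume K: "K \<in> A"
    show "(\<Sum>H\<in>{H\<in>A. H \<subseteq> K}. m H) = f K"
    proof (cases "K = K0")
      case True
      have "{H\<in>A. H \<subseteq> K0} = insert K0 {H\<in>A - {K0}. H \<subseteq> K0}" using K0 by auto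
      then have "(\<Sum>H\<in>{H\<in>A. H \<subseteq> K}. m H) = m K0 + (\<Sum>H\<in>{H\<in>A - {K0}. H \<subseteq> K0}. m H)"
        using True fin by simp
      also have "(\<Sum>H\<in>{H\<in>A - {K0}. H \<subseteq> K0}. m H) = (\<Sum>H\<in>{H\<in>A - {K0}. H \<subseteq> K0}. m' H)"
        by (rule sum.cong) (auto simp: m_def)
      finally show ?thesis by (simp add: m_def True)
    next
      case False
      have "\<not> K0 \<subseteq> K"
      proof
        assume "K0 \<subseteq> K"
        moreover have "finite K" using remove.prems K by blast
        moreover have "card K \<le> card K0" using maxc K by simp
        ultimately have "K0 = K" by (metis card_seteq)
        then show False using False by simp
      qed
      then have "{H\<in>A. H \<subseteq> K} = {H\<in>A - {K0}. H \<subseteq> K}" by auto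
      then have "(\<Sum>H\<in>{H\<in>A. H \<subseteq> K}. m H) = (\<Sum>H\<in>{H\<in>A - {K0}. H \<subseteq> K}. m' H)"
        by (auto simp: m_def intro!: sum.cong)
      also have "\<dots> = f K" using m' K False by blast
      finally show ?thesis .
    qed
  qed
qed



definition cj :: "('a, 'b) monoid_scheme \<Rightarrow> 'a \<Rightarrow> 'a set \<Rightarrow> 'a set" where
  "cj G g X = (\<lambda>x. inv\<^bsub>G\<^esub> g \<otimes>\<^bsub>G\<^esub> x \<otimes>\<^bsub>G\<^esub> g) ` X"

context group
begin

lemma gcan1 [simp]: "g \<in> carrier G \<Longrightarrow> x \<in> carrier G \<Longrightarrow> inv g \<otimes> (g \<otimes> x) = x"
  by (simp add: m_assoc[symmetric])
lemma gcan2 [simp]: "g \<in> carrier G \<Longrightarrow> x \<in> carrier G \<Longrightarrow> g \<otimes> (inv g \<otimes> x) = x"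
  by (simp add: m_assoc[symmetric])

lemma cj_carrier: "X \<subseteq> carrier G \<Longrightarrow> g \<in> carrier G \<Longrightarrow> cj G g X \<subseteq> carrier G"
  unfolding cj_def by auto

lemma cj_inj: "g \<in> carrier G \<Longrightarrow> inj_on (\<lambda>x. inv g \<otimes> x \<otimes> g) (carrier G)"
  by (auto simp: inj_on_def)

lemma cj_card: "X \<subseteq> carrier G \<Longrightarrow> g \<in> carrier G \<Longrightarrow> card (cj G g X) = card X"
  unfolding cj_def by (rule card_image, rule inj_on_subset[OF cj_inj]) auto

lemma mem_cj: "X \<subseteq> carrier G \<Longrightarrow> g \<in> carrier G \<Longrightarrow> y \<in> carrier G \<Longrightarrow>
    y \<in> cj G g X \<longleftrightarrow> g \<otimes> y \<otimes> inv g \<in> X"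
  unfolding cj_def
proof
  assume "X \<subseteq> carrier G" "g \<in> carrier G" "y \<in> carrier G" "y \<in> (\<lambda>x. inv g \<otimes> x \<otimes> g) ` X"
  then show "g \<otimes> y \<otimes> inv g \<in> X" by (auto simp: m_assoc subsetD)
next
  assume a: "X \<subseteq> carrier G" "g \<in> carrier G" "y \<in> carrier G" "g \<otimes> y \<otimes> inv g \<in> X"
  have "y = inv g \<otimes> (g \<otimes> y \<otimes> inv g) \<otimes> g" using a by (simp add: m_assoc)
  then show "y \<in> (\<lambda>x. inv g \<otimes> x \<otimes> g) ` X" using a(4) by blast
qed

lemma cj_mult: "X \<subseteq> carrier G \<Longrightarrow> g \<in> carrier G \<Longrightarrow> h \<in> carrier G \<Longrightarrow>
   cj G (g \<otimes> h) X = cj G h (cj G g X)"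
  unfolding cj_def image_image
  by (intro image_cong refl) (auto simp: inv_mult_group m_assoc subsetD)

lemma cj_one: "X \<subseteq> carrier G \<Longrightarrow> cj G \<one> X = X"
  unfolding cj_def by (auto simp: subsetD)

lemma cj_inv_cancel: "X \<subseteq> carrier G \<Longrightarrow> g \<in> carrier G \<Longrightarrow> cj G (inv g) (cj G g X) = X"
  using cj_mult[of X g "inv g"] cj_one[of X] by simp

lemma cj_inv_cancel2: "X \<subseteq> carrier G \<Longrightarrow> g \<in> carrier G \<Longrightarrow> cj G g (cj G (inv g) X) = X"
  using cj_inv_cancel[of X "inv g"] by simp

lemma cj_mono: "X \<subseteq> Y \<Longrightarrow> cj G g X \<subseteq> cj G g Y"
  unfolding cj_def by auto

lemma subgroup_cj: assumes "subgroup H G" "g \<in> carrier G" shows "subgroup (cj G g H) G"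
proof -
  interpret H: subgroup H G by fact
  show ?thesis
  proof
    show "cj G g H \<subseteq> carrier G" using cj_carrier assms H.subset by blast
    show "\<one> \<in> cj G g H"
      using assms by (simp add: mem_cj[OF H.subset assms(2)])
    fix x y assume x: "x \<in> cj G g H" and y: "y \<in> cj G g H"
    have xc: "x \<in> carrier G" and yc: "y \<in> carrier G"
      using x y cj_carrier[OF H.subset assms(2)] by auto
    have "g \<otimes> (x \<otimes> y) \<otimes> inv g = (g \<otimes> x \<otimes> inv g) \<otimes> (g \<otimes> y \<otimes> inv g)"
      using xc yc assms(2) by (simp add: m_assoc)
    then show "x \<otimes> y \<in> cj G g H"
      using x y xc yc assms by (simp add: mem_cj[OF H.subset assms(2)])
    have "g \<otimes> inv x \<otimes> inv g = inv (g \<otimes> x \<otimes> inv g)"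
      using xc assms(2) by (simp add: inv_mult_group m_assoc)
    then show "inv x \<in> cj G g H"
      using x xc assms by (simp add: mem_cj[OF H.subset assms(2)])
  qed
qed

lemma subgroup_centralizer: assumes "H \<subseteq> carrier G" shows "subgroup (centralizer_of G H) G"
proof
  show "centralizer_of G H \<subseteq> carrier G" unfolding centralizer_of_def by auto
  show "\<one> \<in> centralizer_of G H" unfolding centralizer_of_def using assms by auto
  fix x y assume x: "x \<in> centralizer_of G H" and y: "y \<in> centralizer_of G H"
  show "x \<otimes> y \<in> centralizer_of G H" unfolding centralizer_of_def
  proof (intro CollectI conjI ballI)
    have xc: "x \<in> carrier G" and yc: "y \<in> carrier G" using x y unfolding centralizer_of_def by auto
    then show "x \<otimes> y \<in> carrier G" by simp
    fix h assume h: "h \<in> H"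
    have hc: "h \<in> carrier G" using h assms by auto
    have ex: "x \<otimes> h = h \<otimes> x" and ey: "y \<otimes> h = h \<otimes> y" using x y h unfolding centralizer_of_def by auto
    have "x \<otimes> y \<otimes> h = x \<otimes> (h \<otimes> y)" using xc yc hc ey by (simp add: m_assoc)
    also have "\<dots> = h \<otimes> x \<otimes> y" using xc yc hc ex by (simp add: m_assoc[symmetric])
    finally show "x \<otimes> y \<otimes> h = h \<otimes> (x \<otimes> y)" using xc yc hc by (simp add: m_assoc)
  qed
  show "inv x \<in> centralizer_of G H" unfolding centralizer_of_def
  proof (intro CollectI conjI ballI)
    show "inv x \<in> carrier G" using x unfolding centralizer_of_def by auto
    fix h assume h: "h \<in> H"
    have xc: "x \<in> carrier G" and hc: "h \<in> carrier G" and e: "x \<otimes> h = h \<otimes> x"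
      using x h assms unfolding centralizer_of_def by auto
    have "inv x \<otimes> h = inv x \<otimes> (h \<otimes> x) \<otimes> inv x" using xc hc by (simp add: m_assoc)
    also have "\<dots> = inv x \<otimes> (x \<otimes> h) \<otimes> inv x" using e by simp
    also have "\<dots> = h \<otimes> inv x" using xc hc by (simp add: m_assoc[symmetric])
    finally show "inv x \<otimes> h = h \<otimes> inv x" .
  qed
qed

lemma coset_count:
  assumes "subgroup C G" "finite T" "T \<subseteq> carrier G" "\<forall>g\<in>T. C #> g \<subseteq> T"
  shows "card C * card ((\<lambda>g. C #> g) ` T) = card T"
proof -
  have U: "\<Union> ((\<lambda>g. C #> g) ` T) = T"
  proof
    show "\<Union> ((\<lambda>g. C #> g) ` T) \<subseteq> T" using assms(4) by blast
    show "T \<subseteq> \<Union> ((\<lambda>g. C #> g) ` T)"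
    proof
      fix x assume "x \<in> T"
      then have "x \<in> C #> x" using rcos_self[OF _ assms(1)] assms(3) by blast
      then show "x \<in> \<Union> ((\<lambda>g. C #> g) ` T)" using \<open>x \<in> T\<close> by blast
    qed
  qed
  have "card C * card ((\<lambda>g. C #> g) ` T) = card (\<Union> ((\<lambda>g. C #> g) ` T))"
  proof (rule card_partition)
    show "finite ((\<lambda>g. C #> g) ` T)" using assms(2) by simp
    show "finite (\<Union> ((\<lambda>g. C #> g) ` T))" using U assms(2) by simp
    have Cs: "C \<subseteq> carrier G" using assms(1) subgroup.subset by blast
    have R: "c \<in> rcosets C" if "c \<in> (\<lambda>g. C #> g) ` T" for c
      using that rcosetsI[OF Cs] assms(3) by auto
    show "\<And>c. c \<in> (\<lambda>g. C #> g) ` T \<Longrightarrow> card c = card C"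
      using card_rcosets_equal[OF R Cs] by simp
    show "\<And>c1 c2. c1 \<in> (\<lambda>g. C #> g) ` T \<Longrightarrow> c2 \<in> (\<lambda>g. C #> g) ` T \<Longrightarrow> c1 \<noteq> c2 \<Longrightarrow> c1 \<inter> c2 = {}"
    proof -
      fix c1 c2 assume "c1 \<in> (\<lambda>g. C #> g) ` T" "c2 \<in> (\<lambda>g. C #> g) ` T" "c1 \<noteq> c2"
      then show "c1 \<inter> c2 = {}" using rcos_disjoint[OF assms(1)] R
        unfolding pairwise_def disjnt_def by blast
    qed
  qed
  then show ?thesis using U by simp
qed

lemma card_frob_hom:
  assumes fin: "finite (carrier G)" and H: "H \<subseteq> carrier G"
  shows "card (centralizer_of G H) * card (frob_hom G H K) = card (transporter G H K)"
  unfolding frob_hom_def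
proof (rule coset_count[OF subgroup_centralizer[OF H]])
  show "finite (transporter G H K)" "transporter G H K \<subseteq> carrier G"
    using fin unfolding transporter_def by (auto intro: finite_subset)
  show "\<forall>g\<in>transporter G H K. centralizer_of G H #> g \<subseteq> transporter G H K"
  proof (intro ballI subsetI)
    fix g x assume g: "g \<in> transporter G H K" and x: "x \<in> centralizer_of G H #> g"
    obtain c where c: "c \<in> centralizer_of G H" "x = c \<otimes> g" using x unfolding r_coset_def by auto
    have gc: "g \<in> carrier G" and cc: "c \<in> carrier G" using g c unfolding transporter_def centralizer_of_def by auto
    show "x \<in> transporter G H K" unfolding transporter_def
    proof (intro CollectI conjI ballI)
      show "x \<in> carrier G" using c gc cc by simp
      fix h assume h: "h \<in> H"
      have hc: "h \<in> carrier G" using h H by auto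
      have e: "c \<otimes> h = h \<otimes> c" using c h unfolding centralizer_of_def by auto
      have e': "h \<otimes> (c \<otimes> g) = c \<otimes> (h \<otimes> g)"
        using e cc hc gc by (simp add: m_assoc[symmetric])
      have "inv x \<otimes> h \<otimes> x = inv g \<otimes> h \<otimes> g"
        using c gc cc hc by (simp add: inv_mult_group m_assoc e')
      then show "inv x \<otimes> h \<otimes> x \<in> K" using g h unfolding transporter_def by auto
    qed
  qed
qed

end


context group
begin

lemma rcos_action_hom:
  assumes Q: "subgroup Q G" and R: "subgroup R G"
  shows "group_action (G\<lparr>carrier := R\<rparr>) (rcosets Q) (\<lambda>r. \<lambda>X\<in>rcosets Q. X #> inv r)"
  unfolding group_action_def group_hom_def group_hom_axioms_def
proof (intro conjI)
  show "group (G\<lparr>carrier := R\<rparr>)" using subgroup.subgroup_is_group[OF R] is_group by blast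
  show "group (BijGroup (rcosets Q))" by (rule group_BijGroup)
  have Qs: "Q \<subseteq> carrier G" using Q subgroup.subset by blast
  have Rs: "R \<subseteq> carrier G" using R subgroup.subset by blast
  have closed: "X #> a \<in> rcosets Q" if XQ: "X \<in> rcosets Q" and ac: "a \<in> carrier G" for X a
  proof -
    obtain b where b: "b \<in> carrier G" "X = Q #> b" using XQ unfolding RCOSETS_def by blast
    have "X #> a = Q #> (b \<otimes> a)" using b ac Qs by (simp add: coset_mult_assoc)
    then show ?thesis using b ac rcosetsI[OF Qs] by simp
  qed
  have sub: "X \<subseteq> carrier G" if "X \<in> rcosets Q" for X
    using that subgroup.rcosets_carrier[OF Q is_group] by blast
  have bij: "(\<lambda>X\<in>rcosets Q. X #> inv r) \<in> Bij (rcosets Q)" if r: "r \<in> R" for r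
  proof -
    have rc: "r \<in> carrier G" using r Rs by blast
    have "bij_betw (\<lambda>X. X #> inv r) (rcosets Q) (rcosets Q)"
    proof (rule bij_betw_byWitness[where f' = "\<lambda>X. X #> r"])
      show "\<forall>a\<in>rcosets Q. a #> inv r #> r = a"
        using rc sub by (simp add: coset_mult_assoc)
      show "\<forall>a\<in>rcosets Q. a #> r #> inv r = a"
        using rc sub by (simp add: coset_mult_assoc)
      show "(\<lambda>X. X #> inv r) ` (rcosets Q) \<subseteq> rcosets Q" using closed rc by auto
      show "(\<lambda>X. X #> r) ` (rcosets Q) \<subseteq> rcosets Q" using closed rc by auto
    qed
    moreover have "bij_betw (\<lambda>X\<in>rcosets Q. X #> inv r) (rcosets Q) (rcosets Q) = bij_betw (\<lambda>X. X #> inv r) (rcosets Q) (rcosets Q)"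
      by (rule bij_betw_cong) simp
    ultimately show ?thesis unfolding Bij_def by simp
  qed
  show "(\<lambda>r. \<lambda>X\<in>rcosets Q. X #> inv r) \<in> hom (G\<lparr>carrier := R\<rparr>) (BijGroup (rcosets Q))"
    unfolding hom_def
  proof (intro CollectI conjI ballI)
    show "(\<lambda>r. \<lambda>X\<in>rcosets Q. X #> inv r) \<in> carrier (G\<lparr>carrier := R\<rparr>) \<rightarrow> carrier (BijGroup (rcosets Q))"
      using bij by (auto simp: BijGroup_def)
    fix x y assume x: "x \<in> carrier (G\<lparr>carrier := R\<rparr>)" and y: "y \<in> carrier (G\<lparr>carrier := R\<rparr>)"
    then have xR: "x \<in> R" and yR: "y \<in> R" by auto
    have xc: "x \<in> carrier G" and yc: "y \<in> carrier G" using xR yR Rs by auto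
    have "(\<lambda>X\<in>rcosets Q. X #> inv (x \<otimes> y)) = compose (rcosets Q) (\<lambda>X\<in>rcosets Q. X #> inv x) (\<lambda>X\<in>rcosets Q. X #> inv y)"
      unfolding compose_def
    proof (rule restrict_ext)
      fix X assume X: "X \<in> rcosets Q"
      have "X #> inv (x \<otimes> y) = X #> inv y #> inv x"
        using X xc yc sub by (simp add: coset_mult_assoc inv_mult_group)
      then show "X #> inv (x \<otimes> y) = (\<lambda>X\<in>rcosets Q. X #> inv x) ((\<lambda>X\<in>rcosets Q. X #> inv y) X)"
        using X closed yc by simp
    qed
    then show "(\<lambda>X\<in>rcosets Q. X #> inv (x \<otimes>\<^bsub>G\<lparr>carrier := R\<rparr>\<^esub> y)) =
      (\<lambda>X\<in>rcosets Q. X #> inv x) \<otimes>\<^bsub>BijGroup (rcosets Q)\<^esub> (\<lambda>X\<in>rcosets Q. X #> inv y)"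
      using bij[OF xR] bij[OF yR] by (simp add: BijGroup_def)
  qed
qed

lemma sylow_conj:
  assumes fin: "finite (carrier G)" and p: "prime p"
    and Q: "subgroup Q G" "card Q = p ^ a" "\<not> p dvd (order G div card Q)"
    and R: "subgroup R G" "card R = p ^ b"
  shows "\<exists>x\<in>carrier G. \<forall>r\<in>R. x \<otimes> r \<otimes> inv x \<in> Q"
proof (rule ccontr)
  assume no: "\<not> ?thesis"
  interpret A: group_action "G\<lparr>carrier := R\<rparr>" "rcosets Q" "\<lambda>r. \<lambda>X\<in>rcosets Q. X #> inv r"
    by (rule rcos_action_hom[OF Q(1) R(1)])
  let ?phi = "\<lambda>r. \<lambda>X\<in>rcosets Q. X #> inv r"
  let ?R = "G\<lparr>carrier := R\<rparr>"
  have Qs: "Q \<subseteq> carrier G" using Q subgroup.subset by blast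
  have Rs: "R \<subseteq> carrier G" using R subgroup.subset by blast
  have finE: "finite (rcosets Q)"
    using fin by (metis Qs finite.simps finite_Pow_iff finite_subset rcosets_subset_PowG Q(1))
  have dvd: "p dvd card Ob" if Ob: "Ob \<in> orbits ?R (rcosets Q) ?phi" for Ob
  proof -
    obtain X where X: "X \<in> rcosets Q" "Ob = orbit ?R ?phi X" using Ob unfolding orbits_def by auto
    have "card Ob * card (stabilizer ?R ?phi X) = order ?R"
      using A.orbit_stabilizer_theorem[OF X(1)] X(2) by simp
    moreover have "order ?R = p ^ b" using R(2) by (simp add: order_def)
    ultimately have "card Ob dvd p ^ b" by (metis dvd_triv_left)
    then obtain i where i: "card Ob = p ^ i" using divides_primepow_nat[OF p] by blast
    show ?thesis
    proof (cases i)
      case 0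
      then have c1: "card Ob = 1" using i by simp
      have "X \<in> Ob" using A.orbit_refl[OF X(1)] X(2) by simp
      from c1 obtain z where "Ob = {z}" by (rule card_1_singletonE)
      then have OX: "Ob = {X}" using \<open>X \<in> Ob\<close> by simp
      obtain x where x: "x \<in> carrier G" "X = Q #> x" using X(1) unfolding RCOSETS_def by blast
      have "\<forall>r\<in>R. x \<otimes> r \<otimes> inv x \<in> Q"
      proof
        fix r assume r: "r \<in> R"
        have ir: "inv r \<in> R" using subgroup.m_inv_closed[OF R(1) r] .
        have rc: "r \<in> carrier G" using r Rs by blast
        have "inv r \<in> carrier ?R" using ir by simp
        then have "?phi (inv r) X \<in> orbit ?R ?phi X" unfolding orbit_def by blast
        then have "?phi (inv r) X = X" using OX X(2) by simp
        then have "X #> r = X" using X(1) rc by simp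
        then have "Q #> (x \<otimes> r) = Q #> x" using x rc Qs by (simp add: coset_mult_assoc)
        then have "Q #> (x \<otimes> r \<otimes> inv x) = Q"
          by (rule coset_mult_inv2[OF _ m_closed[OF x(1) rc] x(1) Qs])
        then show "x \<otimes> r \<otimes> inv x \<in> Q" using coset_join1[OF _ _ Q(1)] x(1) rc by blast
      qed
      then have "\<exists>x\<in>carrier G. \<forall>r\<in>R. x \<otimes> r \<otimes> inv x \<in> Q" using x(1) by blast
      then have False using no by simp
      then show ?thesis by simp
    next
      case (Suc j)
      then show ?thesis using i by simp
    qed
  qed
  have "(\<Sum>Ob\<in>orbits ?R (rcosets Q) ?phi. \<Sum>x\<in>Ob. (1::nat)) = (\<Sum>x\<in>rcosets Q. 1)"
    by (rule A.disjoint_sum[OF finE])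
  then have "(\<Sum>Ob\<in>orbits ?R (rcosets Q) ?phi. card Ob) = card (rcosets Q)" by simp
  moreover have "p dvd (\<Sum>Ob\<in>orbits ?R (rcosets Q) ?phi. card Ob)"
    using dvd by (simp add: dvd_sum)
  ultimately have "p dvd card (rcosets Q)" by simp
  moreover have "card (rcosets Q) = order G div card Q"
  proof -
    have cQ: "card Q \<noteq> 0" using Q(2) p by (simp add: prime_gt_0_nat)
    show ?thesis using lagrange[OF Q(1)] cQ by (metis nonzero_mult_div_cancel_right)
  qed
  ultimately show False using Q(3) by simp
qed

end



definition CPm :: "('a, 'b) monoid_scheme \<Rightarrow> 'a set \<Rightarrow> 'a \<Rightarrow> 'a set" where
  "CPm G P m = {x \<in> P. inv\<^bsub>G\<^esub> m \<otimes>\<^bsub>G\<^esub> x \<otimes>\<^bsub>G\<^esub> m = x}"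

locale fset = group G for G (structure) +
  fixes p :: nat and P :: "'a set"
  assumes fin: "finite (carrier G)" and pp: "prime p"
    and syl: "sylow_subgroup G p P" and ab: "abelian_set G P"
begin

lemma P_sub: "subgroup P G" using syl unfolding sylow_subgroup_def p_subgroup_def by blast
lemma P_car: "P \<subseteq> carrier G" using P_sub subgroup.subset by blast
lemma P_fin: "finite P" using P_car fin finite_subset by blast
lemma P_card: "\<exists>a. card P = p ^ a" using syl unfolding sylow_subgroup_def p_subgroup_def by blast
lemma P_index: "\<not> p dvd (order G div card P)" using syl unfolding sylow_subgroup_def by blast

lemma sub_card_dvd:
  assumes "subgroup H G" "subgroup K G" "H \<subseteq> K"
  shows "card H dvd card K"
proof -
  have "subgroup H (G\<lparr>carrier := K\<rparr>)" by (rule subgroup_incl[OF assms])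
  moreover have "group (G\<lparr>carrier := K\<rparr>)" using subgroup.subgroup_is_group[OF assms(2) is_group] .
  ultimately have "card (rcosets\<^bsub>G\<lparr>carrier := K\<rparr>\<^esub> H) * card H = order (G\<lparr>carrier := K\<rparr>)"
    using group.lagrange by blast
  then have "card K = card H * card (rcosets\<^bsub>G\<lparr>carrier := K\<rparr>\<^esub> H)" by (simp add: order_def mult.commute)
  then show ?thesis by (rule dvdI)
qed

lemma sub_card_dvd_G:
  assumes "subgroup H G"
  shows "card H dvd order G"
proof -
  have "order G = card H * card (rcosets H)" using lagrange[OF assms] by (simp add: mult.commute)
  then show ?thesis by (rule dvdI)
qed

lemma cj_eq_one: "X \<subseteq> carrier G \<Longrightarrow> g \<in> carrier G \<Longrightarrow> cj G g X = {\<one>} \<longleftrightarrow> X = {\<one>}"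
proof
  assume X: "X \<subseteq> carrier G" and g: "g \<in> carrier G" and e: "cj G g X = {\<one>}"
  have "X = cj G (inv g) (cj G g X)" using cj_inv_cancel[OF X g] by simp
  also have "\<dots> = {\<one>}" using e g by (simp add: cj_def)
  finally show "X = {\<one>}" .
next
  assume "X \<subseteq> carrier G" "g \<in> carrier G" "X = {\<one>}"
  then show "cj G g X = {\<one>}" by (simp add: cj_def)
qed

lemma obj_props:
  assumes "H \<in> frob_objs G p"
  shows "subgroup H G" "H \<subseteq> carrier G" "finite H" "H \<noteq> {\<one>}" "\<exists>i. card H = p ^ i"
proof -
  show s: "subgroup H G" using assms unfolding frob_objs_def p_subgroup_def by blast
  show c: "H \<subseteq> carrier G" using subgroup.subset[OF s] .
  show "finite H" using finite_subset[OF c fin] .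
  show "H \<noteq> {\<one>}" "\<exists>i. card H = p ^ i" using assms unfolding frob_objs_def p_subgroup_def by auto
qed

lemma objs_fin: "finite (frob_objs G p)"
proof -
  have "frob_objs G p \<subseteq> Pow (carrier G)" using obj_props(2) by blast
  then show ?thesis using fin by (meson finite_Pow_iff finite_subset)
qed

lemma obj_cj:
  assumes H: "H \<in> frob_objs G p" and g: "g \<in> carrier G"
  shows "cj G g H \<in> frob_objs G p"
proof -
  note hp = obj_props[OF H]
  have "subgroup (cj G g H) G" using subgroup_cj[OF hp(1) g] .
  moreover have "card (cj G g H) = card H" using cj_card[OF hp(2) g] .
  moreover have "cj G g H \<noteq> {\<one>}" using cj_eq_one[OF hp(2) g] hp(4) by simp
  ultimately show ?thesis using hp(5) unfolding frob_objs_def p_subgroup_def by simp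
qed

lemma pgroup_sub:
  assumes "subgroup H G" "g \<in> carrier G" "H \<subseteq> cj G g P"
  shows "\<exists>i. card H = p ^ i"
proof -
  obtain a where a: "card P = p ^ a" using P_card by blast
  have "card H dvd card (cj G g P)" using sub_card_dvd[OF assms(1) subgroup_cj[OF P_sub assms(2)] assms(3)] .
  then have "card H dvd p ^ a" using cj_card[OF P_car assms(2)] a by simp
  then show ?thesis using divides_primepow_nat[OF pp] by blast
qed

lemma conj_fix_iff:
  assumes "x \<in> carrier G" "m \<in> carrier G"
  shows "inv m \<otimes> x \<otimes> m = x \<longleftrightarrow> x \<otimes> m = m \<otimes> x"
proof
  assume "inv m \<otimes> x \<otimes> m = x"
  then have "m \<otimes> (inv m \<otimes> x \<otimes> m) = m \<otimes> x" by simp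
  then show "x \<otimes> m = m \<otimes> x" using assms by (simp add: m_assoc)
next
  assume "x \<otimes> m = m \<otimes> x"
  then have "inv m \<otimes> (x \<otimes> m) = inv m \<otimes> (m \<otimes> x)" by simp
  then show "inv m \<otimes> x \<otimes> m = x" using assms by (simp add: m_assoc)
qed

lemma NP_iff: "n \<in> normalizer_of G P \<longleftrightarrow> n \<in> carrier G \<and> cj G n P \<subseteq> P"
  unfolding normalizer_of_def transporter_def cj_def by auto

lemma NP_eq: assumes "n \<in> normalizer_of G P" shows "cj G n P = P"
proof -
  have n: "n \<in> carrier G" "cj G n P \<subseteq> P" using assms NP_iff by auto
  have "card (cj G n P) = card P" using cj_card[OF P_car n(1)] .
  then show ?thesis using n(2) P_fin by (simp add: card_subset_eq)
qed

lemma NP_sub: "subgroup (normalizer_of G P) G"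
proof
  show "normalizer_of G P \<subseteq> carrier G" using NP_iff by blast
  show "\<one> \<in> normalizer_of G P" using NP_iff cj_one[OF P_car] by simp
  fix x y assume x: "x \<in> normalizer_of G P" and y: "y \<in> normalizer_of G P"
  have xc: "x \<in> carrier G" and yc: "y \<in> carrier G" using x y NP_iff by auto
  have "cj G (x \<otimes> y) P = P" using cj_mult[OF P_car xc yc] NP_eq[OF x] NP_eq[OF y] by simp
  then show "x \<otimes> y \<in> normalizer_of G P" using NP_iff xc yc by simp
  have "cj G (inv x) P = P" using cj_inv_cancel[OF P_car xc] NP_eq[OF x] by simp
  then show "inv x \<in> normalizer_of G P" using NP_iff xc by simp
qed

lemma NP_fin: "finite (normalizer_of G P)"
proof -
  have "normalizer_of G P \<subseteq> carrier G" using NP_iff by blast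
  then show ?thesis using fin finite_subset by blast
qed

lemma CPm_eq: "m \<in> carrier G \<Longrightarrow> CPm G P m = P \<inter> centralizer_of G {m}"
  unfolding CPm_def centralizer_of_def using P_car conj_fix_iff by auto

lemma CPm_sub: "m \<in> carrier G \<Longrightarrow> subgroup (CPm G P m) G"
  using CPm_eq subgroups_Inter_pair[OF P_sub subgroup_centralizer[of "{m}"]] by simp

lemma CPm_P: "CPm G P m \<subseteq> P" unfolding CPm_def by auto

lemma cj_CPm_pgroup:
  assumes "m \<in> carrier G" "g \<in> carrier G"
  shows "subgroup (cj G g (CPm G P m)) G" "\<exists>i. card (cj G g (CPm G P m)) = p ^ i"
proof -
  show s: "subgroup (cj G g (CPm G P m)) G" using subgroup_cj[OF CPm_sub[OF assms(1)] assms(2)] .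
  show "\<exists>i. card (cj G g (CPm G P m)) = p ^ i"
    using pgroup_sub[OF s assms(2) cj_mono[OF CPm_P]] .
qed

lemma cj_CPm_obj:
  assumes "m \<in> carrier G" "g \<in> carrier G"
  shows "cj G g (CPm G P m) \<in> frob_objs G p \<longleftrightarrow> CPm G P m \<noteq> {\<one>}"
proof -
  have "CPm G P m \<subseteq> carrier G" using CPm_P P_car by blast
  then show ?thesis using cj_CPm_pgroup[OF assms] cj_eq_one[OF _ assms(2)]
    unfolding frob_objs_def p_subgroup_def by auto
qed

end


lemma fiber_sum:
  assumes "finite S" "finite Ob"
  shows "(\<Sum>K\<in>Ob. card {x\<in>S. f x = K}) = card {x\<in>S. f x \<in> Ob}"
proof -
  have "card (\<Union>K\<in>Ob. {x\<in>S. f x = K}) = (\<Sum>K\<in>Ob. card {x\<in>S. f x = K})"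
    by (rule card_UN_disjoint) (use assms in auto)
  moreover have "(\<Union>K\<in>Ob. {x\<in>S. f x = K}) = {x\<in>S. f x \<in> Ob}" by auto
  ultimately show ?thesis by simp
qed

lemma card_image_same_kernel:
  assumes "\<forall>x\<in>T. \<forall>y\<in>T. f x = f y \<longleftrightarrow> g x = g y"
  shows "card (f ` T) = card (g ` T)"
proof -
  define h where "h = (\<lambda>b. g (SOME x. x \<in> T \<and> f x = b))"
  have hf: "h (f x) = g x" if "x \<in> T" for x
  proof -
    have ex: "\<exists>y. y \<in> T \<and> f y = f x" using that by blast
    have "(SOME y. y \<in> T \<and> f y = f x) \<in> T \<and> f (SOME y. y \<in> T \<and> f y = f x) = f x"
      by (rule someI_ex[OF ex])
    then show ?thesis unfolding h_def using assms that by blast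
  qed
  have "h ` (f ` T) = g ` T" using hf by (auto simp: image_image)
  moreover have "inj_on h (f ` T)"
  proof (rule inj_onI)
    fix a b assume "a \<in> f ` T" "b \<in> f ` T" "h a = h b"
    then obtain x y where "x \<in> T" "y \<in> T" "a = f x" "b = f y" "g x = g y" using hf by auto
    then show "a = b" using assms by blast
  qed
  ultimately show ?thesis by (metis card_image)
qed

definition wgt :: "('a, 'b) monoid_scheme \<Rightarrow> 'a set \<Rightarrow> 'a set \<Rightarrow> rat" where
  "wgt G P K = of_nat (card {x \<in> carrier G \<times> normalizer_of G P. cj G (fst x) (CPm G P (snd x)) = K})
     / (of_nat (card (carrier G)) * of_nat (card (normalizer_of G P)))"

context fset
begin

definition rr :: "'a \<Rightarrow> 'a \<Rightarrow> 'a" where "rr m = (\<lambda>x\<in>P. inv m \<otimes> x \<otimes> m)"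

lemma fusion_eq: "fusion_auts G P = rr ` normalizer_of G P"
  unfolding fusion_auts_def rr_def by simp

lemma fixed_rr: "fixed_points P (rr m) = CPm G P m"
  unfolding fixed_points_def rr_def CPm_def by auto

lemma rr_eq_iff:
  assumes m: "m \<in> carrier G" and m': "m' \<in> carrier G"
  shows "rr m = rr m' \<longleftrightarrow> m' \<otimes> inv m \<in> centralizer_of G P"
proof -
  define u where "u = m' \<otimes> inv m"
  have uc: "u \<in> carrier G" using m m' u_def by simp
  have m'u: "m' = u \<otimes> m" using m m' u_def by (simp add: m_assoc)
  have pt: "inv m \<otimes> x \<otimes> m = inv m' \<otimes> x \<otimes> m' \<longleftrightarrow> u \<otimes> x = x \<otimes> u" if x: "x \<in> carrier G" for x
  proof -
    have "inv m' \<otimes> x \<otimes> m' = inv m \<otimes> (inv u \<otimes> x \<otimes> u) \<otimes> m"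
      using m'u uc m x by (simp add: inv_mult_group m_assoc)
    then have "inv m \<otimes> x \<otimes> m = inv m' \<otimes> x \<otimes> m' \<longleftrightarrow> x = inv u \<otimes> x \<otimes> u"
      using m x uc inj_onD[OF cj_inj[OF m], of x "inv u \<otimes> x \<otimes> u"] by auto
    also have "\<dots> \<longleftrightarrow> u \<otimes> x = x \<otimes> u" using conj_fix_iff[OF x uc] by auto
    finally show ?thesis .
  qed
  have "rr m = rr m' \<longleftrightarrow> (\<forall>x\<in>P. inv m \<otimes> x \<otimes> m = inv m' \<otimes> x \<otimes> m')"
  proof
    assume e: "rr m = rr m'"
    show "\<forall>x\<in>P. inv m \<otimes> x \<otimes> m = inv m' \<otimes> x \<otimes> m'"
    proof
      fix x assume "x \<in> P"
      then show "inv m \<otimes> x \<otimes> m = inv m' \<otimes> x \<otimes> m'" using fun_cong[OF e, of x] by (simp add: rr_def)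
    qed
  next
    assume "\<forall>x\<in>P. inv m \<otimes> x \<otimes> m = inv m' \<otimes> x \<otimes> m'"
    then show "rr m = rr m'" unfolding rr_def by (intro restrict_ext) simp
  qed
  also have "\<dots> \<longleftrightarrow> (\<forall>x\<in>P. u \<otimes> x = x \<otimes> u)" using pt P_car by blast
  also have "\<dots> \<longleftrightarrow> u \<in> centralizer_of G P" unfolding centralizer_of_def using uc by simp
  finally show ?thesis unfolding u_def .
qed

lemma rcos_eq_iff:
  assumes m: "m \<in> carrier G" and m': "m' \<in> carrier G" and C: "subgroup C G"
  shows "C #> m = C #> m' \<longleftrightarrow> m' \<otimes> inv m \<in> C"
proof
  assume "C #> m = C #> m'"
  then have "m' \<in> C #> m" using rcos_self[OF m' C] by simp
  then show "m' \<otimes> inv m \<in> C" using subgroup.rcos_module_imp[OF C is_group m] by blast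
next
  assume "m' \<otimes> inv m \<in> C"
  then have "m' \<in> C #> m" using subgroup.rcos_module_rev[OF C is_group m m'] by blast
  then show "C #> m = C #> m'" using repr_independence[OF _ m C] by blast
qed

lemma rr_cent:
  assumes c: "c \<in> centralizer_of G P" and g: "g \<in> carrier G"
  shows "rr (c \<otimes> g) = rr g"
proof -
  have cc: "c \<in> carrier G" using c unfolding centralizer_of_def by auto
  have "g \<otimes> inv (c \<otimes> g) = inv c" using cc g by (simp add: inv_mult_group m_assoc[symmetric])
  moreover have "inv c \<in> centralizer_of G P"
    using c subgroup.m_inv_closed[OF subgroup_centralizer[OF P_car]] by blast
  ultimately show ?thesis using rr_eq_iff[OF m_closed[OF cc g] g] by simp
qed

lemma NP_coset_closed:
  assumes T: "T = {m \<in> normalizer_of G P. Q (rr m)}" and g: "g \<in> T"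
  shows "centralizer_of G P #> g \<subseteq> T"
proof
  fix x assume x: "x \<in> centralizer_of G P #> g"
  obtain c where c: "c \<in> centralizer_of G P" "x = c \<otimes> g" using x unfolding r_coset_def by auto
  have gN: "g \<in> normalizer_of G P" using g T by simp
  have gc: "g \<in> carrier G" using gN NP_iff by simp
  have cc: "c \<in> carrier G" using c unfolding centralizer_of_def by auto
  have e: "rr x = rr g" using rr_cent[OF c(1) gc] c(2) by simp
  have "cj G x P = cj G g P"
  proof -
    have "cj G x P = rr x ` P" unfolding cj_def rr_def by simp
    also have "\<dots> = rr g ` P" using e by simp
    also have "\<dots> = cj G g P" unfolding cj_def rr_def by simp
    finally show ?thesis .
  qed
  then have "x \<in> normalizer_of G P" using NP_iff gN c cc gc by simp
  then show "x \<in> T" using T g e by simp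
qed

lemma count_over_C:
  assumes T: "T = {m \<in> normalizer_of G P. Q (rr m)}"
  shows "card T = card (centralizer_of G P) * card (rr ` T)"
proof -
  have TN: "T \<subseteq> normalizer_of G P" using T by auto
  then have Tc: "T \<subseteq> carrier G" using NP_iff by blast
  have "card (centralizer_of G P) * card ((\<lambda>g. centralizer_of G P #> g) ` T) = card T"
    by (rule coset_count[OF subgroup_centralizer[OF P_car] finite_subset[OF TN NP_fin] Tc])
       (use NP_coset_closed[OF T] in blast)
  moreover have "card ((\<lambda>g. centralizer_of G P #> g) ` T) = card (rr ` T)"
  proof (rule card_image_same_kernel, intro ballI)
    fix x y assume "x \<in> T" "y \<in> T"
    then have xc: "x \<in> carrier G" and yc: "y \<in> carrier G" using Tc by auto
    show "centralizer_of G P #> x = centralizer_of G P #> y \<longleftrightarrow> rr x = rr y"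
      using rcos_eq_iff[OF xc yc subgroup_centralizer[OF P_car]] rr_eq_iff[OF xc yc] by simp
  qed
  ultimately show ?thesis by simp
qed

lemma rhs_eq:
  "(of_nat (card {\<phi> \<in> fusion_auts G P. fixed_points P \<phi> \<noteq> {\<one>}}) / of_nat (card (fusion_auts G P)) :: rat)
   = of_nat (card {m \<in> normalizer_of G P. CPm G P m \<noteq> {\<one>}}) / of_nat (card (normalizer_of G P))"
proof -
  let ?C = "card (centralizer_of G P)"
  have C0: "?C \<noteq> 0"
  proof -
    have "\<one> \<in> centralizer_of G P" using subgroup.one_closed[OF subgroup_centralizer[OF P_car]] .
    moreover have "finite (centralizer_of G P)" using fin unfolding centralizer_of_def by simp
    ultimately show ?thesis by auto
  qed
  have a: "card (normalizer_of G P) = ?C * card (rr ` normalizer_of G P)"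
    using count_over_C[of "normalizer_of G P" "\<lambda>_. True"] by simp
  have b: "card {m \<in> normalizer_of G P. CPm G P m \<noteq> {\<one>}} = ?C * card (rr ` {m \<in> normalizer_of G P. CPm G P m \<noteq> {\<one>}})"
    using count_over_C[of _ "\<lambda>\<phi>. fixed_points P \<phi> \<noteq> {\<one>}"] fixed_rr by simp
  have c: "rr ` {m \<in> normalizer_of G P. CPm G P m \<noteq> {\<one>}} = {\<phi> \<in> fusion_auts G P. fixed_points P \<phi> \<noteq> {\<one>}}"
    unfolding fusion_eq using fixed_rr by auto
  show ?thesis using a b c C0 fusion_eq by simp
qed

lemma wsum:
  "(\<Sum>K\<in>frob_objs G p. wgt G P K) = of_nat (card {m \<in> normalizer_of G P. CPm G P m \<noteq> {\<one>}}) / of_nat (card (normalizer_of G P))"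
proof -
  let ?S = "carrier G \<times> normalizer_of G P"
  let ?f = "\<lambda>x. cj G (fst x) (CPm G P (snd x))"
  have finS: "finite ?S" using fin NP_fin by simp
  have "(\<Sum>K\<in>frob_objs G p. card {x\<in>?S. ?f x = K}) = card {x\<in>?S. ?f x \<in> frob_objs G p}"
    by (rule fiber_sum[OF finS objs_fin])
  also have "{x\<in>?S. ?f x \<in> frob_objs G p} = {x\<in>?S. CPm G P (snd x) \<noteq> {\<one>}}"
  proof (rule Collect_cong)
    fix x show "(x \<in> ?S \<and> ?f x \<in> frob_objs G p) = (x \<in> ?S \<and> CPm G P (snd x) \<noteq> {\<one>})"
    proof (cases "x \<in> ?S")
      case True
      then have "fst x \<in> carrier G" "snd x \<in> carrier G" using NP_iff by auto
      then show ?thesis using cj_CPm_obj[of "snd x" "fst x"] True by simp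
    qed simp
  qed
  also have "\<dots> = carrier G \<times> {m \<in> normalizer_of G P. CPm G P m \<noteq> {\<one>}}" by (simp add: set_eq_iff mem_Times_iff conj_assoc)
  finally have e: "(\<Sum>K\<in>frob_objs G p. card {x\<in>?S. ?f x = K}) = card (carrier G) * card {m \<in> normalizer_of G P. CPm G P m \<noteq> {\<one>}}"
    by (simp add: card_cartesian_product)
  have G0: "card (carrier G) \<noteq> 0" using fin by auto
  have "(\<Sum>K\<in>frob_objs G p. wgt G P K) = of_nat (\<Sum>K\<in>frob_objs G p. card {x\<in>?S. ?f x = K}) / (of_nat (card (carrier G)) * of_nat (card (normalizer_of G P)))"
    unfolding wgt_def by (simp add: sum_divide_distrib)
  also have "\<dots> = of_nat (card {m \<in> normalizer_of G P. CPm G P m \<noteq> {\<one>}}) / of_nat (card (normalizer_of G P))"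
    unfolding e using G0 by simp
  finally show ?thesis .
qed

end


context fset
begin

lemma cj_sub_iff:
  assumes "X \<subseteq> carrier G" "Y \<subseteq> carrier G" "g \<in> carrier G"
  shows "X \<subseteq> cj G g Y \<longleftrightarrow> cj G (inv g) X \<subseteq> Y"
proof
  assume "X \<subseteq> cj G g Y"
  then have "cj G (inv g) X \<subseteq> cj G (inv g) (cj G g Y)" by (rule cj_mono)
  then show "cj G (inv g) X \<subseteq> Y" using cj_inv_cancel[OF assms(2,3)] by simp
next
  assume "cj G (inv g) X \<subseteq> Y"
  then have "cj G g (cj G (inv g) X) \<subseteq> cj G g Y" by (rule cj_mono)
  then show "X \<subseteq> cj G g Y" using cj_inv_cancel2[OF assms(1,3)] by simp
qed

lemma ab_cj: assumes g: "g \<in> carrier G" shows "abelian_set G (cj G g P)"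
  unfolding abelian_set_def
proof (intro ballI)
  fix x y assume "x \<in> cj G g P" "y \<in> cj G g P"
  then obtain a b where ab': "a \<in> P" "b \<in> P" "x = inv g \<otimes> a \<otimes> g" "y = inv g \<otimes> b \<otimes> g"
    unfolding cj_def by auto
  have ac: "a \<in> carrier G" "b \<in> carrier G" using ab'(1,2) P_car by auto
  have e: "a \<otimes> b = b \<otimes> a" using ab ab'(1,2) unfolding abelian_set_def by blast
  have "x \<otimes> y = inv g \<otimes> (a \<otimes> b) \<otimes> g" using ab'(3,4) ac g by (simp add: m_assoc)
  also have "\<dots> = inv g \<otimes> (b \<otimes> a) \<otimes> g" using e by simp
  also have "\<dots> = y \<otimes> x" using ab'(3,4) ac g by (simp add: m_assoc)
  finally show "x \<otimes> y = y \<otimes> x" .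
qed

lemma cj_centralizer_fix:
  assumes L: "L \<subseteq> carrier G" and d: "d \<in> centralizer_of G L"
  shows "cj G d L = L"
proof -
  have dc: "d \<in> carrier G" using d unfolding centralizer_of_def by auto
  have "inv d \<otimes> l \<otimes> d = l" if "l \<in> L" for l
    using conj_fix_iff[of l d] d that L dc unfolding centralizer_of_def by auto
  then show ?thesis unfolding cj_def by (auto simp: image_iff)
qed

definition Tset :: "'a set \<Rightarrow> 'a set" where
  "Tset L = {g \<in> carrier G. L \<subseteq> cj G g P}"

lemma Tset_nonempty:
  assumes L: "L \<in> frob_objs G p"
  shows "\<exists>g0. g0 \<in> Tset L"
proof -
  note lp = obj_props[OF L]
  obtain a where a: "card P = p ^ a" using P_card by blast
  obtain b where b: "card L = p ^ b" using lp(5) by blast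
  obtain x where x: "x \<in> carrier G" "\<forall>r\<in>L. x \<otimes> r \<otimes> inv x \<in> P"
    using sylow_conj[OF fin pp P_sub a P_index lp(1) b] by blast
  have "cj G (inv x) L \<subseteq> P" unfolding cj_def using x by auto
  then have "L \<subseteq> cj G x P" using cj_sub_iff[OF lp(2) P_car x(1)] by simp
  then show ?thesis using x(1) unfolding Tset_def by blast
qed

lemma P_in_centralizer:
  assumes g: "g \<in> Tset L" and L: "L \<subseteq> carrier G"
  shows "cj G g P \<subseteq> centralizer_of G L"
proof
  fix x assume x: "x \<in> cj G g P"
  have gc: "g \<in> carrier G" and Lg: "L \<subseteq> cj G g P" using g unfolding Tset_def by auto
  have xc: "x \<in> carrier G" using x cj_carrier[OF P_car gc] by blast
  have "x \<otimes> h = h \<otimes> x" if "h \<in> L" for h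
    using ab_cj[OF gc] x Lg that unfolding abelian_set_def by blast
  then show "x \<in> centralizer_of G L" unfolding centralizer_of_def using xc by blast
qed

lemma transitivity:
  assumes L: "L \<in> frob_objs G p" and g0: "g0 \<in> Tset L" and g: "g \<in> Tset L"
  shows "\<exists>n\<in>normalizer_of G P. \<exists>d\<in>centralizer_of G L. n \<otimes> g0 \<otimes> d = g"
proof -
  note lp = obj_props[OF L]
  have g0c: "g0 \<in> carrier G" and gc: "g \<in> carrier G" using g0 g unfolding Tset_def by auto
  let ?C = "centralizer_of G L"
  let ?K = "G\<lparr>carrier := ?C\<rparr>"
  have Csub: "subgroup ?C G" using subgroup_centralizer[OF lp(2)] .
  have K: "group ?K" using subgroup.subgroup_is_group[OF Csub is_group] .
  have finK: "finite (carrier ?K)" using fin unfolding centralizer_of_def by simp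
  have Pg0: "subgroup (cj G g0 P) G" using subgroup_cj[OF P_sub g0c] .
  have Pg: "subgroup (cj G g P) G" using subgroup_cj[OF P_sub gc] .
  have Pg0K: "subgroup (cj G g0 P) ?K" using subgroup_incl[OF Pg0 Csub P_in_centralizer[OF g0 lp(2)]] .
  have PgK: "subgroup (cj G g P) ?K" using subgroup_incl[OF Pg Csub P_in_centralizer[OF g lp(2)]] .
  obtain a where a: "card P = p ^ a" using P_card by blast
  have cg0: "card (cj G g0 P) = p ^ a" using cj_card[OF P_car g0c] a by simp
  have cg: "card (cj G g P) = p ^ a" using cj_card[OF P_car gc] a by simp
  have idx: "\<not> p dvd (order ?K div card (cj G g0 P))"
  proof
    assume pd: "p dvd (order ?K div card (cj G g0 P))"
    have "card (cj G g0 P) dvd card ?C" using sub_card_dvd[OF Pg0 Csub P_in_centralizer[OF g0 lp(2)]] .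
    then obtain i1 where i1: "card ?C = card P * i1" using cj_card[OF P_car g0c] by (auto elim: dvdE)
    obtain i2 where i2: "order G = card ?C * i2" using sub_card_dvd_G[OF Csub] by (auto elim: dvdE)
    have P0: "card P \<noteq> 0" using a pp by (simp add: prime_gt_0_nat)
    have "order ?K div card (cj G g0 P) = i1" using i1 P0 cj_card[OF P_car g0c] by (simp add: order_def)
    moreover have "order G div card P = i1 * i2" using i1 i2 P0 by (simp add: mult.assoc)
    ultimately show False using pd P_index by simp
  qed
  obtain x where x: "x \<in> ?C" "\<forall>r\<in>cj G g P. x \<otimes>\<^bsub>?K\<^esub> r \<otimes>\<^bsub>?K\<^esub> inv\<^bsub>?K\<^esub> x \<in> cj G g0 P"
    using group.sylow_conj[OF K finK pp Pg0K cg0 idx PgK cg] by auto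
  have xc: "x \<in> carrier G" using x(1) unfolding centralizer_of_def by auto
  have "\<forall>r\<in>cj G g P. x \<otimes> r \<otimes> inv x \<in> cj G g0 P" using x m_inv_consistent[OF Csub x(1)] by simp
  then have "cj G (inv x) (cj G g P) \<subseteq> cj G g0 P" unfolding cj_def using xc by auto
  then have sub: "cj G (g \<otimes> inv x) P \<subseteq> cj G g0 P" using cj_mult[OF P_car gc inv_closed[OF xc]] by simp
  have "card (cj G (g \<otimes> inv x) P) = card (cj G g0 P)"
    using cj_card[OF P_car m_closed[OF gc inv_closed[OF xc]]] cj_card[OF P_car g0c] by simp
  then have eq: "cj G (g \<otimes> inv x) P = cj G g0 P"
    using sub finite_subset[OF cj_carrier[OF P_car g0c] fin] by (simp add: card_subset_eq)
  define n where "n = g \<otimes> inv x \<otimes> inv g0"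
  have nc: "n \<in> carrier G" using n_def gc xc g0c by simp
  have "cj G n P = cj G (inv g0) (cj G (g \<otimes> inv x) P)"
    unfolding n_def using cj_mult[OF P_car m_closed[OF gc inv_closed[OF xc]] inv_closed[OF g0c]] by simp
  also have "\<dots> = P" using eq cj_inv_cancel[OF P_car g0c] by simp
  finally have "n \<in> normalizer_of G P" using NP_iff nc by simp
  moreover have "n \<otimes> g0 \<otimes> x = g" unfolding n_def using gc xc g0c by (simp add: m_assoc)
  ultimately show ?thesis using x(1) by blast
qed


definition Sg :: "'a set \<Rightarrow> 'a \<Rightarrow> 'a set" where
  "Sg L g = {m \<in> normalizer_of G P. \<forall>y\<in>cj G (inv g) L. inv m \<otimes> y \<otimes> m = y}"

lemma stepA:
  assumes L: "L \<in> frob_objs G p"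
  shows "{x \<in> carrier G \<times> normalizer_of G P. L \<subseteq> cj G (fst x) (CPm G P (snd x))} = Sigma (Tset L) (Sg L)"
proof -
  note lp = obj_props[OF L]
  have key: "L \<subseteq> cj G g (CPm G P m) \<longleftrightarrow> g \<in> Tset L \<and> m \<in> Sg L g"
    if g: "g \<in> carrier G" and m: "m \<in> normalizer_of G P" for g m
  proof -
    have CPc: "CPm G P m \<subseteq> carrier G" using CPm_P P_car by blast
    have "L \<subseteq> cj G g (CPm G P m) \<longleftrightarrow> cj G (inv g) L \<subseteq> CPm G P m" using cj_sub_iff[OF lp(2) CPc g] .
    also have "\<dots> \<longleftrightarrow> cj G (inv g) L \<subseteq> P \<and> (\<forall>y\<in>cj G (inv g) L. inv m \<otimes> y \<otimes> m = y)"
      unfolding CPm_def by blast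
    also have "cj G (inv g) L \<subseteq> P \<longleftrightarrow> L \<subseteq> cj G g P" using cj_sub_iff[OF lp(2) P_car g] by simp
    finally show ?thesis unfolding Tset_def Sg_def using g m by auto
  qed
  have sub: "Sigma (Tset L) (Sg L) \<subseteq> carrier G \<times> normalizer_of G P"
    unfolding Tset_def Sg_def by auto
  show ?thesis
  proof (rule Set.set_eqI)
    fix x :: "'a \<times> 'a"
    obtain g m where x: "x = (g, m)" by fastforce
    show "x \<in> {x \<in> carrier G \<times> normalizer_of G P. L \<subseteq> cj G (fst x) (CPm G P (snd x))} \<longleftrightarrow> x \<in> Sigma (Tset L) (Sg L)"
    proof (cases "g \<in> carrier G \<and> m \<in> normalizer_of G P")
      case True
      then show ?thesis using key[of g m] x by simp
    next
      case False
      then show ?thesis using sub x by auto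
    qed
  qed
qed

lemma Phi_into:
  assumes L: "L \<in> frob_objs G p" and g0: "g0 \<in> Tset L"
    and n: "n \<in> normalizer_of G P" and d: "d \<in> centralizer_of G L"
  shows "n \<otimes> g0 \<otimes> d \<in> Tset L"
proof -
  note lp = obj_props[OF L]
  have g0c: "g0 \<in> carrier G" and Lg0: "L \<subseteq> cj G g0 P" using g0 unfolding Tset_def by auto
  have nc: "n \<in> carrier G" using n NP_iff by auto
  have dc: "d \<in> carrier G" using d unfolding centralizer_of_def by auto
  have "cj G (n \<otimes> g0 \<otimes> d) P = cj G d (cj G g0 (cj G n P))"
    using cj_mult[OF P_car m_closed[OF nc g0c] dc] cj_mult[OF P_car nc g0c] by simp
  also have "\<dots> = cj G d (cj G g0 P)" using NP_eq[OF n] by simp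
  finally have e: "cj G (n \<otimes> g0 \<otimes> d) P = cj G d (cj G g0 P)" .
  have "L = cj G d L" using cj_centralizer_fix[OF lp(2) d] by simp
  also have "\<dots> \<subseteq> cj G d (cj G g0 P)" using cj_mono[OF Lg0] .
  finally show ?thesis unfolding Tset_def using e nc g0c dc by simp
qed


lemma conj_conj:
  assumes g: "g \<in> carrier G" and e: "e \<in> carrier G" and l: "l \<in> carrier G"
  shows "inv (g \<otimes> e \<otimes> inv g) \<otimes> (g \<otimes> l \<otimes> inv g) \<otimes> (g \<otimes> e \<otimes> inv g) = g \<otimes> (inv e \<otimes> l \<otimes> e) \<otimes> inv g"
  using g e l by (simp add: inv_mult_group m_assoc)

lemma outer_conj_inj:
  assumes g: "g \<in> carrier G" and "a \<in> carrier G" "b \<in> carrier G" "g \<otimes> a \<otimes> inv g = g \<otimes> b \<otimes> inv g"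
  shows "a = b"
  using assms by simp

lemma fiber_card:
  assumes L: "L \<in> frob_objs G p" and g0: "g0 \<in> Tset L" and g: "g \<in> Tset L"
  shows "card {x \<in> normalizer_of G P \<times> centralizer_of G L. fst x \<otimes> g0 \<otimes> snd x = g} = card (Sg L g)"
proof -
  note lp = obj_props[OF L]
  let ?N = "normalizer_of G P"
  let ?C = "centralizer_of G L"
  let ?F = "{x \<in> ?N \<times> ?C. fst x \<otimes> g0 \<otimes> snd x = g}"
  have Csub: "subgroup ?C G" using subgroup_centralizer[OF lp(2)] .
  have Cc: "?C \<subseteq> carrier G" using subgroup.subset[OF Csub] .
  have Nc: "?N \<subseteq> carrier G" using NP_iff by auto
  have g0c: "g0 \<in> carrier G" and gc: "g \<in> carrier G" using g0 g unfolding Tset_def by auto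
  obtain n1 d1 where n1: "n1 \<in> ?N" and d1: "d1 \<in> ?C" and nd: "n1 \<otimes> g0 \<otimes> d1 = g"
    using transitivity[OF L g0 g] by blast
  have n1c: "n1 \<in> carrier G" and d1c: "d1 \<in> carrier G" using n1 d1 Nc Cc by auto
  have h0: "g0 \<otimes> d1 = inv n1 \<otimes> g"
  proof -
    have "inv n1 \<otimes> g = inv n1 \<otimes> (n1 \<otimes> g0 \<otimes> d1)" using nd by simp
    also have "\<dots> = g0 \<otimes> d1" using n1c g0c d1c by (simp add: m_assoc)
    finally show ?thesis by simp
  qed
  have cfix: "inv e \<otimes> l \<otimes> e = l" if "e \<in> ?C" "l \<in> L" for e l
    using that conj_fix_iff[of l e] lp(2) Cc unfolding centralizer_of_def by auto
  have finN: "finite ?N" using NP_fin .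
  have finC: "finite ?C" using finite_subset[OF Cc fin] .
  have finSg: "finite (Sg L g)" using finite_subset[OF _ finN] unfolding Sg_def by auto
  have finF: "finite ?F" using finN finC by simp
  define chi where "chi = (\<lambda>x::'a \<times> 'a. g \<otimes> (inv (snd x) \<otimes> d1) \<otimes> inv g)"
  have chi_in: "chi x \<in> Sg L g" if x: "x \<in> ?F" for x
  proof -
    obtain n d where nd': "x = (n, d)" by fastforce
    have n: "n \<in> ?N" and d: "d \<in> ?C" and eqx: "n \<otimes> g0 \<otimes> d = g" using x nd' by auto
    have nc: "n \<in> carrier G" and dc: "d \<in> carrier G" using n d Nc Cc by auto
    define e where "e = inv d \<otimes> d1"
    have eC: "e \<in> ?C" unfolding e_def using subgroup.m_closed[OF Csub subgroup.m_inv_closed[OF Csub d] d1] .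
    have ec: "e \<in> carrier G" using eC Cc by auto
    have ch: "chi x = g \<otimes> e \<otimes> inv g" unfolding chi_def e_def nd' by simp
    have "g \<otimes> e \<otimes> inv g = (n \<otimes> g0 \<otimes> d) \<otimes> (inv d \<otimes> d1) \<otimes> inv g" using eqx e_def by simp
    also have "\<dots> = n \<otimes> (g0 \<otimes> d1) \<otimes> inv g" using nc g0c dc d1c gc by (simp add: m_assoc)
    also have "\<dots> = n \<otimes> (inv n1 \<otimes> g) \<otimes> inv g" using h0 by simp
    also have "\<dots> = n \<otimes> inv n1" using nc n1c gc by (simp add: m_assoc)
    finally have mN: "g \<otimes> e \<otimes> inv g \<in> ?N"
      using subgroup.m_closed[OF NP_sub n subgroup.m_inv_closed[OF NP_sub n1]] by simp
    have "\<forall>y\<in>cj G (inv g) L. inv (g \<otimes> e \<otimes> inv g) \<otimes> y \<otimes> (g \<otimes> e \<otimes> inv g) = y"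
    proof
      fix y assume "y \<in> cj G (inv g) L"
      then obtain l where l: "l \<in> L" "y = g \<otimes> l \<otimes> inv g" unfolding cj_def using gc by auto
      have lc: "l \<in> carrier G" using l lp(2) by auto
      show "inv (g \<otimes> e \<otimes> inv g) \<otimes> y \<otimes> (g \<otimes> e \<otimes> inv g) = y"
        using conj_conj[OF gc ec lc] cfix[OF eC l(1)] l(2) by simp
    qed
    then show ?thesis unfolding Sg_def ch using mN by simp
  qed
  have chi_inj: "inj_on chi ?F"
  proof (rule inj_onI)
    fix x y assume x: "x \<in> ?F" and y: "y \<in> ?F" and e: "chi x = chi y"
    have xc: "fst x \<in> carrier G" "snd x \<in> carrier G" and yc: "fst y \<in> carrier G" "snd y \<in> carrier G"
      using x y Nc Cc by auto
    have "inv (snd x) \<otimes> d1 = inv (snd y) \<otimes> d1"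
      using outer_conj_inj[OF gc _ _ e[unfolded chi_def]] xc yc d1c by simp
    then have "inv (snd x) = inv (snd y)" using xc yc d1c by simp
    then have s: "snd x = snd y" using xc yc by (metis inv_inv)
    have fx: "fst x = g \<otimes> inv (snd x) \<otimes> inv g0"
    proof -
      have "fst x = (fst x \<otimes> g0 \<otimes> snd x) \<otimes> inv (snd x) \<otimes> inv g0" using xc g0c by (simp add: m_assoc)
      then show ?thesis using x by simp
    qed
    have fy: "fst y = g \<otimes> inv (snd y) \<otimes> inv g0"
    proof -
      have "fst y = (fst y \<otimes> g0 \<otimes> snd y) \<otimes> inv (snd y) \<otimes> inv g0" using yc g0c by (simp add: m_assoc)
      then show ?thesis using y by simp
    qed
    show "x = y" using s fx fy by (simp add: prod_eq_iff)
  qed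
  define psi where "psi = (\<lambda>m. (m \<otimes> n1, d1 \<otimes> inv (inv g \<otimes> m \<otimes> g)))"
  have psi_in: "psi m \<in> ?F" if m: "m \<in> Sg L g" for m
  proof -
    have mN: "m \<in> ?N" and mcent: "\<forall>y\<in>cj G (inv g) L. inv m \<otimes> y \<otimes> m = y" using m unfolding Sg_def by auto
    have mc: "m \<in> carrier G" using mN Nc by auto
    define e where "e = inv g \<otimes> m \<otimes> g"
    have ec: "e \<in> carrier G" using e_def mc gc by simp
    have me: "m = g \<otimes> e \<otimes> inv g" using e_def mc gc by (simp add: m_assoc)
    have eC: "e \<in> ?C" unfolding centralizer_of_def
    proof (intro CollectI conjI ballI)
      show "e \<in> carrier G" by (rule ec)
      fix l assume l: "l \<in> L"
      have lc: "l \<in> carrier G" using l lp(2) by auto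
      have "g \<otimes> l \<otimes> inv g \<in> cj G (inv g) L" unfolding cj_def using l gc by (auto intro!: image_eqI[of _ _ l])
      then have "inv m \<otimes> (g \<otimes> l \<otimes> inv g) \<otimes> m = g \<otimes> l \<otimes> inv g" using mcent by blast
      then have "g \<otimes> (inv e \<otimes> l \<otimes> e) \<otimes> inv g = g \<otimes> l \<otimes> inv g" using conj_conj[OF gc ec lc] me by simp
      then have "inv e \<otimes> l \<otimes> e = l" using outer_conj_inj[OF gc] ec lc by simp
      then show "e \<otimes> l = l \<otimes> e" using conj_fix_iff[OF lc ec] by simp
    qed
    have fstN: "m \<otimes> n1 \<in> ?N" using subgroup.m_closed[OF NP_sub mN n1] .
    have sndC: "d1 \<otimes> inv e \<in> ?C" using subgroup.m_closed[OF Csub d1 subgroup.m_inv_closed[OF Csub eC]] .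
    have "m \<otimes> n1 \<otimes> g0 \<otimes> (d1 \<otimes> inv e) = m \<otimes> (n1 \<otimes> g0 \<otimes> d1) \<otimes> inv e"
      using mc n1c g0c d1c ec by (simp add: m_assoc)
    also have "\<dots> = m \<otimes> g \<otimes> inv e" using nd by simp
    also have "\<dots> = g" unfolding e_def using mc gc by (simp add: inv_mult_group m_assoc)
    finally show ?thesis unfolding psi_def using fstN sndC e_def by simp
  qed
  have psi_inj: "inj_on psi (Sg L g)"
  proof (rule inj_onI)
    fix m m' assume m: "m \<in> Sg L g" and m': "m' \<in> Sg L g" and e: "psi m = psi m'"
    have "m \<in> carrier G" "m' \<in> carrier G" using m m' Nc unfolding Sg_def by auto
    moreover have "m \<otimes> n1 = m' \<otimes> n1" using e unfolding psi_def by simp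
    ultimately show "m = m'" using n1c by simp
  qed
  have "card ?F \<le> card (Sg L g)" using card_inj_on_le[OF chi_inj _ finSg] chi_in by blast
  moreover have "card (Sg L g) \<le> card ?F" using card_inj_on_le[OF psi_inj _ finF] psi_in by blast
  ultimately show ?thesis by simp
qed


lemma key_count:
  assumes L: "L \<in> frob_objs G p"
  shows "card {x \<in> carrier G \<times> normalizer_of G P. L \<subseteq> cj G (fst x) (CPm G P (snd x))}
       = card (normalizer_of G P) * card (centralizer_of G L)"
proof -
  note lp = obj_props[OF L]
  let ?N = "normalizer_of G P"
  let ?C = "centralizer_of G L"
  obtain g0 where g0: "g0 \<in> Tset L" using Tset_nonempty[OF L] by blast
  have Cc: "?C \<subseteq> carrier G" unfolding centralizer_of_def by auto
  have finT: "finite (Tset L)" using fin unfolding Tset_def by simp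
  have finSg: "finite (Sg L g)" for g using finite_subset[OF _ NP_fin] unfolding Sg_def by auto
  have finNC: "finite (?N \<times> ?C)" using NP_fin finite_subset[OF Cc fin] by simp
  have "card {x \<in> carrier G \<times> ?N. L \<subseteq> cj G (fst x) (CPm G P (snd x))} = card (Sigma (Tset L) (Sg L))"
    using stepA[OF L] by simp
  also have "\<dots> = (\<Sum>g\<in>Tset L. card (Sg L g))" using finT finSg by simp
  also have "\<dots> = (\<Sum>g\<in>Tset L. card {x \<in> ?N \<times> ?C. fst x \<otimes> g0 \<otimes> snd x = g})"
    using fiber_card[OF L g0] by simp
  also have "\<dots> = card {x \<in> ?N \<times> ?C. fst x \<otimes> g0 \<otimes> snd x \<in> Tset L}"
    by (rule fiber_sum[OF finNC finT])
  also have "{x \<in> ?N \<times> ?C. fst x \<otimes> g0 \<otimes> snd x \<in> Tset L} = ?N \<times> ?C"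
    using Phi_into[OF L g0] by auto
  also have "card (?N \<times> ?C) = card ?N * card ?C" by (simp add: card_cartesian_product)
  finally show ?thesis .
qed

end


lemma card_filter_sum:
  assumes "finite A"
  shows "(of_nat (card {x\<in>A. Q x}) :: rat) = (\<Sum>x\<in>A. if Q x then 1 else 0)"
proof -
  have "(of_nat (card {x\<in>A. Q x}) :: rat) = (\<Sum>x\<in>{x\<in>A. Q x}. 1)" by simp
  also have "\<dots> = (\<Sum>x\<in>A. if Q x then 1 else 0)" by (rule sum.inter_filter[OF assms])
  finally show ?thesis .
qed

lemma if01_mult: "(if b then 1 else 0) * (w::rat) = (if b then w else 0)" by simp
lemma mult_if01: "(w::rat) * (if b then 1 else 0) = (if b then w else 0)" by simp

context fset
begin

lemma transporter_eq: "transporter G H K = {g \<in> carrier G. cj G g H \<subseteq> K}"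
  unfolding transporter_def cj_def by auto

lemma up_sum:
  assumes L: "L \<in> frob_objs G p"
  shows "(\<Sum>K\<in>{K\<in>frob_objs G p. L \<subseteq> K}. wgt G P K) = of_nat (card (centralizer_of G L)) / of_nat (card (carrier G))"
proof -
  note lp = obj_props[OF L]
  let ?S = "carrier G \<times> normalizer_of G P"
  let ?f = "\<lambda>x. cj G (fst x) (CPm G P (snd x))"
  have finS: "finite ?S" using fin NP_fin by simp
  have finO: "finite {K\<in>frob_objs G p. L \<subseteq> K}" using objs_fin by simp
  have "(\<Sum>K\<in>{K\<in>frob_objs G p. L \<subseteq> K}. card {x\<in>?S. ?f x = K}) = card {x\<in>?S. ?f x \<in> {K\<in>frob_objs G p. L \<subseteq> K}}"
    by (rule fiber_sum[OF finS finO])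
  also have "{x\<in>?S. ?f x \<in> {K\<in>frob_objs G p. L \<subseteq> K}} = {x\<in>?S. L \<subseteq> ?f x}"
  proof (rule Collect_cong)
    fix x
    show "(x \<in> ?S \<and> ?f x \<in> {K \<in> frob_objs G p. L \<subseteq> K}) = (x \<in> ?S \<and> L \<subseteq> ?f x)"
    proof (cases "x \<in> ?S")
      case True
      then have gc: "fst x \<in> carrier G" and mc: "snd x \<in> carrier G" using NP_iff by auto
      have "?f x \<in> frob_objs G p" if sub: "L \<subseteq> ?f x"
      proof -
        have "CPm G P (snd x) \<noteq> {\<one>}"
        proof
          assume "CPm G P (snd x) = {\<one>}"
          then have "?f x = {\<one>}" using gc by (simp add: cj_def)
          then have "L \<subseteq> {\<one>}" using sub by simp
          moreover have "\<one> \<in> L" using subgroup.one_closed[OF lp(1)] .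
          ultimately show False using lp(4) by auto
        qed
        then show ?thesis using cj_CPm_obj[OF mc gc] by simp
      qed
      then show ?thesis using True by auto
    qed simp
  qed
  finally have e: "(\<Sum>K\<in>{K\<in>frob_objs G p. L \<subseteq> K}. card {x\<in>?S. ?f x = K}) = card (normalizer_of G P) * card (centralizer_of G L)"
    using key_count[OF L] by simp
  have G0: "card (carrier G) \<noteq> 0" using fin by auto
  have N0: "card (normalizer_of G P) \<noteq> 0"
    using NP_fin subgroup.one_closed[OF NP_sub] by auto
  have "(\<Sum>K\<in>{K\<in>frob_objs G p. L \<subseteq> K}. wgt G P K)
      = of_nat (\<Sum>K\<in>{K\<in>frob_objs G p. L \<subseteq> K}. card {x\<in>?S. ?f x = K}) / (of_nat (card (carrier G)) * of_nat (card (normalizer_of G P)))"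
    unfolding wgt_def by (simp add: sum_divide_distrib)
  also have "\<dots> = of_nat (card (centralizer_of G L)) / of_nat (card (carrier G))"
    unfolding e using G0 N0 by simp
  finally show ?thesis .
qed

lemma centralizer_cj:
  assumes H: "H \<subseteq> carrier G" and g: "g \<in> carrier G"
  shows "centralizer_of G (cj G g H) = cj G g (centralizer_of G H)"
proof (rule Set.set_eqI)
  fix y
  show "y \<in> centralizer_of G (cj G g H) \<longleftrightarrow> y \<in> cj G g (centralizer_of G H)"
  proof (cases "y \<in> carrier G")
    case False
    then show ?thesis using cj_carrier[OF _ g, of "centralizer_of G H"] unfolding centralizer_of_def by auto
  next
    case True
    have Cc: "centralizer_of G H \<subseteq> carrier G" unfolding centralizer_of_def by auto
    have eq: "y \<otimes> (inv g \<otimes> h \<otimes> g) = (inv g \<otimes> h \<otimes> g) \<otimes> y \<longleftrightarrow>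
              (g \<otimes> y \<otimes> inv g) \<otimes> h = h \<otimes> (g \<otimes> y \<otimes> inv g)" if h: "h \<in> H" for h
    proof -
      have hc: "h \<in> carrier G" using h H by auto
      have a: "g \<otimes> (y \<otimes> (inv g \<otimes> h \<otimes> g)) \<otimes> inv g = (g \<otimes> y \<otimes> inv g) \<otimes> h"
        using hc g True by (simp add: m_assoc)
      have b: "g \<otimes> ((inv g \<otimes> h \<otimes> g) \<otimes> y) \<otimes> inv g = h \<otimes> (g \<otimes> y \<otimes> inv g)"
        using hc g True by (simp add: m_assoc)
      show ?thesis
      proof
        assume "y \<otimes> (inv g \<otimes> h \<otimes> g) = (inv g \<otimes> h \<otimes> g) \<otimes> y"
        then show "(g \<otimes> y \<otimes> inv g) \<otimes> h = h \<otimes> (g \<otimes> y \<otimes> inv g)" using a b by simp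
      next
        assume "(g \<otimes> y \<otimes> inv g) \<otimes> h = h \<otimes> (g \<otimes> y \<otimes> inv g)"
        then have "g \<otimes> (y \<otimes> (inv g \<otimes> h \<otimes> g)) \<otimes> inv g = g \<otimes> ((inv g \<otimes> h \<otimes> g) \<otimes> y) \<otimes> inv g"
          using a b by simp
        then show "y \<otimes> (inv g \<otimes> h \<otimes> g) = (inv g \<otimes> h \<otimes> g) \<otimes> y"
          by (rule outer_conj_inj[OF g, rotated 2]) (use hc g True in simp_all)
      qed
    qed
    have "y \<in> centralizer_of G (cj G g H) \<longleftrightarrow> (\<forall>h\<in>H. y \<otimes> (inv g \<otimes> h \<otimes> g) = (inv g \<otimes> h \<otimes> g) \<otimes> y)"
      unfolding centralizer_of_def cj_def using True by auto
    also have "\<dots> \<longleftrightarrow> (\<forall>h\<in>H. (g \<otimes> y \<otimes> inv g) \<otimes> h = h \<otimes> (g \<otimes> y \<otimes> inv g))" using eq by blast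
    also have "\<dots> \<longleftrightarrow> g \<otimes> y \<otimes> inv g \<in> centralizer_of G H"
      unfolding centralizer_of_def using True g by simp
    also have "\<dots> \<longleftrightarrow> y \<in> cj G g (centralizer_of G H)" using mem_cj[OF Cc g True] by simp
    finally show ?thesis .
  qed
qed

lemma card_centralizer_cj:
  assumes H: "H \<subseteq> carrier G" and g: "g \<in> carrier G"
  shows "card (centralizer_of G (cj G g H)) = card (centralizer_of G H)"
proof -
  have Cc: "centralizer_of G H \<subseteq> carrier G" unfolding centralizer_of_def by auto
  show ?thesis using centralizer_cj[OF H g] cj_card[OF Cc g] by simp
qed

lemma weighting: "is_weighting (frob_objs G p) (\<lambda>H K. card (frob_hom G H K)) (wgt G P)"
  unfolding is_weighting_def
proof
  fix H assume H: "H \<in> frob_objs G p"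
  note hp = obj_props[OF H]
  let ?O = "frob_objs G p"
  let ?c = "card (centralizer_of G H)"
  have c0: "?c \<noteq> 0"
    using subgroup.one_closed[OF subgroup_centralizer[OF hp(2)]] fin unfolding centralizer_of_def
    by (auto simp: card_eq_0_iff)
  have G0: "card (carrier G) \<noteq> 0" using fin by auto
  have fh: "(of_nat (card (frob_hom G H K)) :: rat) = of_nat (card (transporter G H K)) / of_nat ?c" for K
  proof -
    have "?c * card (frob_hom G H K) = card (transporter G H K)" using card_frob_hom[OF fin hp(2)] .
    then have "(of_nat ?c :: rat) * of_nat (card (frob_hom G H K)) = of_nat (card (transporter G H K))"
      by (metis of_nat_mult)
    then show ?thesis using c0 by (simp add: field_simps)
  qed
  have "(\<Sum>K\<in>?O. of_nat (card (transporter G H K)) * wgt G P K)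
      = (\<Sum>K\<in>?O. \<Sum>g\<in>carrier G. (if cj G g H \<subseteq> K then wgt G P K else 0))"
    unfolding transporter_eq using card_filter_sum[OF fin]
    by (simp add: sum_distrib_right if01_mult)
  also have "\<dots> = (\<Sum>g\<in>carrier G. \<Sum>K\<in>?O. (if cj G g H \<subseteq> K then wgt G P K else 0))"
    by (rule sum.swap)
  also have "\<dots> = (\<Sum>g\<in>carrier G. \<Sum>K\<in>{K\<in>?O. cj G g H \<subseteq> K}. wgt G P K)"
    using objs_fin by (simp add: sum.inter_filter)
  also have "\<dots> = (\<Sum>g\<in>carrier G. of_nat ?c / of_nat (card (carrier G)))"
  proof (rule sum.cong[OF refl])
    fix g assume g: "g \<in> carrier G"
    show "(\<Sum>K\<in>{K\<in>?O. cj G g H \<subseteq> K}. wgt G P K) = of_nat ?c / of_nat (card (carrier G))"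
      using up_sum[OF obj_cj[OF H g]] card_centralizer_cj[OF hp(2) g] by simp
  qed
  also have "\<dots> = of_nat ?c" using G0 by simp
  finally have e: "(\<Sum>K\<in>?O. of_nat (card (transporter G H K)) * wgt G P K) = of_nat ?c" .
  have "(\<Sum>K\<in>?O. of_nat (card (frob_hom G H K)) * wgt G P K)
      = (\<Sum>K\<in>?O. of_nat (card (transporter G H K)) * wgt G P K) / of_nat ?c"
    unfolding fh by (simp add: sum_divide_distrib)
  also have "\<dots> = 1" using e c0 by simp
  finally show "(\<Sum>K\<in>?O. of_nat (card (frob_hom G H K)) * wgt G P K) = 1" .
qed

lemma coweighting: "\<exists>c. is_coweighting (frob_objs G p) (\<lambda>H K. card (frob_hom G H K)) c"
proof -
  let ?O = "frob_objs G p"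
  obtain m :: "'a set \<Rightarrow> rat" where m: "\<forall>K\<in>?O. (\<Sum>H\<in>{H\<in>?O. H \<subseteq> K}. m H) = 1 / of_nat (card (carrier G))"
  proof -
    have "\<forall>K\<in>?O. finite K" using obj_props(3) by blast
    then show ?thesis using that exists_down_inverse[OF objs_fin, of "\<lambda>_. 1 / of_nat (card (carrier G))"] by blast
  qed
  define c where "c = (\<lambda>H. of_nat (card (centralizer_of G H)) * m H)"
  have G0: "card (carrier G) \<noteq> 0" using fin by auto
  have "is_coweighting ?O (\<lambda>H K. card (frob_hom G H K)) c"
    unfolding is_coweighting_def
  proof
    fix K assume K: "K \<in> ?O"
    have "(\<Sum>H\<in>?O. c H * of_nat (card (frob_hom G H K))) = (\<Sum>H\<in>?O. m H * of_nat (card (transporter G H K)))"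
    proof (rule sum.cong[OF refl])
      fix H assume H: "H \<in> ?O"
      have "card (centralizer_of G H) * card (frob_hom G H K) = card (transporter G H K)"
        using card_frob_hom[OF fin obj_props(2)[OF H]] .
      then have "(of_nat (card (centralizer_of G H)) :: rat) * of_nat (card (frob_hom G H K)) = of_nat (card (transporter G H K))"
        by (metis of_nat_mult)
      then show "c H * of_nat (card (frob_hom G H K)) = m H * of_nat (card (transporter G H K))"
        unfolding c_def by (simp add: algebra_simps)
    qed
    also have "\<dots> = (\<Sum>H\<in>?O. \<Sum>g\<in>carrier G. (if cj G g H \<subseteq> K then m H else 0))"
      unfolding transporter_eq using card_filter_sum[OF fin]
      by (simp add: sum_distrib_left mult_if01)
    also have "\<dots> = (\<Sum>g\<in>carrier G. \<Sum>H\<in>?O. (if cj G g H \<subseteq> K then m H else 0))"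
      by (rule sum.swap)
    also have "\<dots> = (\<Sum>g\<in>carrier G. \<Sum>H\<in>{H\<in>?O. H \<subseteq> cj G (inv g) K}. m H)"
    proof (rule sum.cong[OF refl])
      fix g assume g: "g \<in> carrier G"
      have "(\<Sum>H\<in>?O. (if cj G g H \<subseteq> K then m H else 0)) = (\<Sum>H\<in>?O. (if H \<subseteq> cj G (inv g) K then m H else 0))"
      proof (rule sum.cong[OF refl])
        fix H assume H: "H \<in> ?O"
        have "H \<subseteq> cj G (inv g) K \<longleftrightarrow> cj G (inv (inv g)) H \<subseteq> K"
          using cj_sub_iff[OF obj_props(2)[OF H] obj_props(2)[OF K] inv_closed[OF g]] .
        then show "(if cj G g H \<subseteq> K then m H else 0) = (if H \<subseteq> cj G (inv g) K then m H else 0)"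
          using g by simp
      qed
      also have "\<dots> = (\<Sum>H\<in>{H\<in>?O. H \<subseteq> cj G (inv g) K}. m H)"
        using objs_fin by (simp add: sum.inter_filter)
      finally show "(\<Sum>H\<in>?O. (if cj G g H \<subseteq> K then m H else 0)) = (\<Sum>H\<in>{H\<in>?O. H \<subseteq> cj G (inv g) K}. m H)" .
    qed
    also have "\<dots> = (\<Sum>g\<in>carrier G. 1 / of_nat (card (carrier G)))"
      using m obj_cj[OF K inv_closed] by (intro sum.cong[OF refl]) simp
    also have "\<dots> = 1" using G0 by simp
    finally show "(\<Sum>H\<in>?O. c H * of_nat (card (frob_hom G H K))) = 1" .
  qed
  then show ?thesis by blast
qed

theorem main:
  "has_euler_char (frob_objs G p) (\<lambda>H K. card (frob_hom G H K))
     (of_nat (card {\<phi> \<in> fusion_auts G P. fixed_points P \<phi> \<noteq> {\<one>}}) / of_nat (card (fusion_auts G P)))"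
proof -
  obtain c where c: "is_coweighting (frob_objs G p) (\<lambda>H K. card (frob_hom G H K)) c"
    using coweighting by blast
  show ?thesis
    using euler_char_intro[OF objs_fin weighting c] wsum rhs_eq by simp
qed

end

theorem corollary5p6:
  fixes G :: "('a, 'b) monoid_scheme" and p :: nat and P :: "'a set"
  assumes "group G" and "finite (carrier G)" and "prime p"
    and "sylow_subgroup G p P" and "abelian_set G P"
  shows "has_euler_char (frob_objs G p) (\<lambda>H K. card (frob_hom G H K))
           (of_nat (card {\<phi> \<in> fusion_auts G P. fixed_points P \<phi> \<noteq> {\<one>\<^bsub>G\<^esub>}})
            / of_nat (card (fusion_auts G P)))"
proof -
  have "fset G p P" unfolding fset_def fset_axioms_def using assms by blast
  then show ?thesis by (rule fset.main)
qed

end
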